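(* Let $f:\mathbb{R}\to\mathbb{R}$ be Abel continuous, and let $(p_n)$ be a sequence of real numbers which is slowly oscillating and Abel convergent. Then $(f(p_n))$ is a convergent sequence.
   Context: A sequence $(p_n)$ of real numbers is Abel convergent to $\ell$ if $\sum_{k=0}^{\infty}p_k x^k$ converges for every $0\le x<1$ and $\lim_{x\to 1^-}(1-x)\sum_{k=0}^{\infty}p_k x^k=\ell$. $f$ is Abel continuous if for every sequence $(p_n)$ Abel convergent to some $\ell$, $(f(p_n))$ is Abel convergent to $f(\ell)$. A sequence $(p_n)$ is slowly oscillating if for every $\varepsilon>0$ there exist $\delta>0$ and a positive integer $N$ such that $|p_m-p_n|<\varepsilon$ whenever $n\ge N$ and $n\le m\le(1+\delta)n$. *)

theory Defs
  imports "HOL-Analysis.Analysis"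
begin

definition abel_convergent_to :: "(nat \<Rightarrow> real) \<Rightarrow> real \<Rightarrow> bool" where
  "abel_convergent_to p l \<longleftrightarrow>
     (\<forall>x::real. 0 \<le> x \<and> x < 1 \<longrightarrow> summable (\<lambda>k. p k * x ^ k)) \<and>
     ((\<lambda>x. (1 - x) * (\<Sum>k. p k * x ^ k)) \<longlongrightarrow> l) (at_left 1)"

definition abel_convergent :: "(nat \<Rightarrow> real) \<Rightarrow> bool" where
  "abel_convergent p \<longleftrightarrow> (\<exists>l. abel_convergent_to p l)"

definition abel_continuous :: "(real \<Rightarrow> real) \<Rightarrow> bool" where
  "abel_continuous f \<longleftrightarrow>
     (\<forall>p l. abel_convergent_to p l \<longrightarrow> abel_convergent_to (\<lambda>n. f (p n)) (f l))"

definition slowly_oscillating :: "(nat \<Rightarrow> real) \<Rightarrow> bool" where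
  "slowly_oscillating p \<longleftrightarrow>
     (\<forall>\<epsilon>>0. \<exists>\<delta>>0. \<exists>N::nat. N > 0 \<and>
        (\<forall>n m. n \<ge> N \<and> n \<le> m \<and> real m \<le> (1 + \<delta>) * real n \<longrightarrow> \<bar>p m - p n\<bar> < \<epsilon>))"

end

theory Submission
  imports Defs
begin


lemma ev_at_left_1: "eventually (\<lambda>x::real. 0 < x \<and> x < 1) (at_left 1)"
  using eventually_at_left_real[of 0 1] by (simp add: greaterThanLessThan_iff)

lemma geom_sum_mult: fixes x c :: real assumes "0 \<le> x" "x < 1"
  shows "summable (\<lambda>k. c * x^k)" "(\<Sum>k. c * x^k) = c / (1 - x)"
  using assms by (auto intro!: summable_mult simp: suminf_mult suminf_geometric)

lemma abel_lower:
  fixes a :: "nat \<Rightarrow> real"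
  assumes "abel_convergent_to a L" "\<And>k. c \<le> a k"
  shows "c \<le> L"
proof (rule tendsto_lowerbound)
  show "((\<lambda>x. (1 - x) * (\<Sum>k. a k * x ^ k)) \<longlongrightarrow> L) (at_left 1)"
    using assms(1) unfolding abel_convergent_to_def by blast
  show "eventually (\<lambda>x. c \<le> (1 - x) * (\<Sum>k. a k * x ^ k)) (at_left (1::real))"
    using ev_at_left_1
  proof eventually_elim
    case (elim x)
    have s: "summable (\<lambda>k. a k * x^k)" using assms(1) elim unfolding abel_convergent_to_def by auto
    have "(\<Sum>k. c * x^k) \<le> (\<Sum>k. a k * x ^ k)"
      using elim by (intro suminf_le s geom_sum_mult) (auto intro!: mult_right_mono assms(2))
    then have "c / (1-x) \<le> (\<Sum>k. a k * x ^ k)" using geom_sum_mult[of x c] elim by simp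
    then show ?case using elim by (simp add: field_simps)
  qed
qed simp

lemma abel_upper:
  fixes a :: "nat \<Rightarrow> real"
  assumes "abel_convergent_to a L" "\<And>k. a k \<le> c"
  shows "L \<le> c"
proof (rule tendsto_upperbound)
  show "((\<lambda>x. (1 - x) * (\<Sum>k. a k * x ^ k)) \<longlongrightarrow> L) (at_left 1)"
    using assms(1) unfolding abel_convergent_to_def by blast
  show "eventually (\<lambda>x. (1 - x) * (\<Sum>k. a k * x ^ k) \<le> c) (at_left (1::real))"
    using ev_at_left_1
  proof eventually_elim
    case (elim x)
    have s: "summable (\<lambda>k. a k * x^k)" using assms(1) elim unfolding abel_convergent_to_def by auto
    have "(\<Sum>k. a k * x ^ k) \<le> (\<Sum>k. c * x^k)"
      using elim by (intro suminf_le s geom_sum_mult) (auto intro!: mult_right_mono assms(2))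
    then have "(\<Sum>k. a k * x ^ k) \<le> c / (1-x)" using geom_sum_mult[of x c] elim by simp
    then show ?case using elim by (simp add: field_simps)
  qed
qed simp


lemma abs_suminf_le:
  fixes a b :: "nat \<Rightarrow> real"
  assumes "\<And>k. \<bar>a k\<bar> \<le> b k" "summable b"
  shows "summable a" "\<bar>suminf a\<bar> \<le> suminf b"
proof -
  have n: "\<forall>k. norm (a k) \<le> b k" using assms(1) by simp
  show sa: "summable a" by (rule summable_comparison_test[OF _ assms(2)]) (use n in blast)
  have sra: "summable (\<lambda>k. \<bar>a k\<bar>)" by (rule summable_comparison_test[OF _ assms(2)]) (use n in simp)
  have "\<bar>suminf a\<bar> \<le> (\<Sum>k. \<bar>a k\<bar>)" by (rule summable_rabs[OF sra])
  also have "\<dots> \<le> suminf b" by (rule suminf_le[OF assms(1) sra assms(2)])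
  finally show "\<bar>suminf a\<bar> \<le> suminf b" .
qed

lemma bounded_summable:
  fixes a :: "nat \<Rightarrow> real"
  assumes "\<And>k. \<bar>a k\<bar> \<le> B" "0 \<le> x" "x < 1"
  shows "summable (\<lambda>k. a k * x^k)"
proof (rule abs_suminf_le(1)[of _ "\<lambda>k. B * x^k"])
  show "summable (\<lambda>k. B * x^k)" using geom_sum_mult assms by blast
  fix k show "\<bar>a k * x ^ k\<bar> \<le> B * x ^ k"
    using assms by (simp add: abs_mult mult_right_mono)
qed

lemma abel_of_convergent:
  fixes s :: "nat \<Rightarrow> real"
  assumes "s \<longlonglongrightarrow> c"
  shows "abel_convergent_to s c"
proof -
  obtain M where M: "M > 0" "\<And>k. \<bar>s k\<bar> \<le> M"
    using convergent_imp_Bseq[OF convergentI[OF assms]] by (auto elim!: BseqE)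
  have sm: "summable (\<lambda>k. s k * x^k)" if "0 \<le> x" "x < 1" for x
    using bounded_summable[OF M(2) that] .
  have "((\<lambda>x. (1 - x) * (\<Sum>k. s k * x ^ k)) \<longlongrightarrow> c) (at_left 1)"
  proof (rule tendstoI)
    fix e :: real assume e: "e > 0"
    obtain K where K: "\<And>k. k \<ge> K \<Longrightarrow> \<bar>s k - c\<bar> < e/2"
      using LIMSEQ_D[OF assms, of "e/2"] e by (auto simp: dist_real_def)
    have Mc: "\<bar>c\<bar> \<le> M" using M(2) by (intro tendsto_upperbound[OF tendsto_rabs[OF assms]]) auto
    define x0 where "x0 = max 0 (1 - e / (4 * M * K + 1))"
    have "e / (4 * M * K + 1) > 0" using e M by (intro divide_pos_pos) (auto intro!: add_nonneg_pos mult_nonneg_nonneg)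
    then have "x0 < 1" unfolding x0_def by auto
    then have ev: "eventually (\<lambda>x. x \<in> {x0<..<1}) (at_left (1::real))"
      by (rule eventually_at_left_real)
    show "eventually (\<lambda>x. dist ((1 - x) * (\<Sum>k. s k * x ^ k)) c < e) (at_left 1)"
      using ev
    proof eventually_elim
      case (elim x)
      then have x: "0 < x" "x < 1" "x0 < x" unfolding x0_def by auto
      define b where "b k = (if k < K then 2 * M * x^k else 0) + e/2 * x^k" for k
      have sf: "summable (\<lambda>k. (if k < K then 2 * M * x^k else 0))"
        by (rule summable_finite[of "{..<K}"]) auto
      have sg: "summable (\<lambda>k. e/2 * x^k)" using x geom_sum_mult[of x "e/2"] by auto
      have sb: "summable b" unfolding b_def using sf sg by (rule summable_add)
      have sbv: "suminf b = (\<Sum>k<K. 2 * M * x^k) + e/2 / (1 - x)"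
      proof -
        have "suminf b = (\<Sum>k. (if k < K then 2 * M * x^k else 0)) + (\<Sum>k. e/2 * x^k)"
          unfolding b_def by (rule suminf_add[symmetric, OF sf sg])
        also have "(\<Sum>k. (if k < K then 2 * M * x^k else 0)) = (\<Sum>k<K. 2 * M * x^k)"
          by (subst suminf_finite[of "{..<K}"]) auto
        finally show ?thesis using geom_sum_mult[of x "e/2"] x by simp
      qed
      have bnd: "\<bar>(s k - c) * x^k\<bar> \<le> b k" for k
      proof (cases "k < K")
        case True
        have "\<bar>s k - c\<bar> \<le> 2 * M" using M(2)[of k] Mc by linarith
        then have "\<bar>s k - c\<bar> * x^k \<le> 2 * M * x^k" using x by (intro mult_right_mono) auto
        moreover have "0 \<le> e/2 * x^k" using x e by auto
        moreover have "\<bar>(s k - c) * x^k\<bar> = \<bar>s k - c\<bar> * x^k" using x by (simp add: abs_mult)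
        moreover have "b k = 2 * M * x^k + e/2 * x^k" using True by (simp add: b_def)
        ultimately show ?thesis by linarith
      next
        case False
        then show ?thesis using K[of k] x unfolding b_def by (auto simp: abs_mult intro!: mult_right_mono)
      qed
      note sd = abs_suminf_le[of "\<lambda>k. (s k - c) * x^k" b, OF bnd sb]
      have eq: "(1 - x) * (\<Sum>k. s k * x ^ k) - c = (1 - x) * (\<Sum>k. (s k - c) * x ^ k)"
      proof -
        have "(\<Sum>k. (s k - c) * x ^ k) = (\<Sum>k. s k * x ^ k) - (\<Sum>k. c * x ^ k)"
        proof -
          have a1: "summable (\<lambda>k. s k * x^k)" using sm[of x] x by simp
          have a2: "summable (\<lambda>k. c * x^k)" using geom_sum_mult[of x c] x by simp
          show ?thesis using suminf_diff[OF a1 a2] by (simp add: left_diff_distrib)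
        qed
        then show ?thesis using geom_sum_mult[of x c] x by (simp add: field_simps)
      qed
      have "\<bar>(1 - x) * (\<Sum>k. (s k - c) * x ^ k)\<bar> \<le> (1 - x) * suminf b"
        using sd(2) x by (simp add: abs_mult mult_left_mono)
      also have "\<dots> = (1 - x) * (\<Sum>k<K. 2 * M * x^k) + e/2" using sbv x by (simp add: field_simps)
      also have "(\<Sum>k<K. 2 * M * x^k) \<le> (\<Sum>k<K. 2 * M)"
        using x M by (intro sum_mono) (auto simp: power_le_one)
      also have "(1 - x) * (\<Sum>k<K. 2 * M) < e / 2"
      proof -
        have "1 - x < e / (4 * M * K + 1)" using x(3) unfolding x0_def by auto
        moreover have "(\<Sum>k<K. 2 * M) = 2 * M * K" by simp
        ultimately have "(1 - x) * (\<Sum>k<K. 2 * M) \<le> e / (4 * M * K + 1) * (2 * M * K)"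
        proof -
          have "(1 - x) * (2 * M * K) \<le> e / (4 * M * real K + 1) * (2 * M * K)"
            using M x \<open>1 - x < _\<close> by (intro mult_right_mono) auto
          then show ?thesis using \<open>(\<Sum>k<K. 2 * M) = _\<close> by (simp add: mult.commute)
        qed
        also have "\<dots> < e / 2"
        proof -
          define t where "t = 4 * M * K"
          have t: "t \<ge> 0" using M unfolding t_def by simp
          have "e / (4 * M * K + 1) * (2 * M * K) = (e/2) * (t / (t + 1))" unfolding t_def by (simp add: field_simps)
          also have "\<dots> < (e/2) * 1" using e t by (intro mult_strict_left_mono) auto
          finally show ?thesis by simp
        qed
        finally show ?thesis .
      qed
      finally show ?case using eq x by (simp add: dist_real_def mult_left_mono)
    qed
  qed
  then show ?thesis unfolding abel_convergent_to_def using sm by auto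
qed


lemma seq_from_approx:
  fixes y :: real
  assumes "\<And>d. d > 0 \<Longrightarrow> \<exists>z. \<bar>z - y\<bar> < d \<and> P z"
  obtains z where "z \<longlonglongrightarrow> y" "\<And>n. P (z n)"
proof -
  define z where "z n = (SOME z. \<bar>z - y\<bar> < inverse (real (Suc n)) \<and> P z)" for n
  have zz: "\<bar>z n - y\<bar> < inverse (real (Suc n)) \<and> P (z n)" for n
    unfolding z_def by (rule someI_ex) (rule assms, simp)
  have "(\<lambda>n. z n - y) \<longlonglongrightarrow> 0"
    by (rule Lim_null_comparison[OF _ LIMSEQ_inverse_real_of_nat])
       (use zz in \<open>auto intro!: always_eventually less_imp_le\<close>)
  then have "(\<lambda>n. z n - y + y) \<longlonglongrightarrow> 0 + y" by (intro tendsto_add) auto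
  then have "z \<longlonglongrightarrow> y" by simp
  then show ?thesis using that zz by blast
qed

lemma abel_continuous_isCont:
  assumes "abel_continuous f"
  shows "isCont f y"
proof (rule ccontr)
  assume nc: "\<not> isCont f y"
  have "\<exists>e>0. \<forall>d>0. \<exists>z. \<bar>z - y\<bar> < d \<and> \<bar>f z - f y\<bar> \<ge> e"
  proof (rule ccontr)
    assume "\<not> ?thesis"
    then have "\<forall>e>0. \<exists>d>0. \<forall>z. \<bar>z - y\<bar> < d \<longrightarrow> \<bar>f z - f y\<bar> < e"
      by (auto simp: not_le)
    then have "isCont f y" unfolding isCont_def LIM_eq by (metis real_norm_def)
    with nc show False by simp
  qed
  then obtain e where e: "e > 0" "\<And>d. d > 0 \<Longrightarrow> \<exists>z. \<bar>z - y\<bar> < d \<and> \<bar>f z - f y\<bar> \<ge> e"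
    by blast
  show False
  proof (cases "\<forall>d>0. \<exists>z. \<bar>z - y\<bar> < d \<and> f z \<ge> f y + e")
    case True
    then obtain z where z: "z \<longlonglongrightarrow> y" "\<And>n. f (z n) \<ge> f y + e"
      using seq_from_approx[of y "\<lambda>z. f z \<ge> f y + e"] by blast
    have "abel_convergent_to (\<lambda>n. f (z n)) (f y)"
      using assms abel_of_convergent[OF z(1)] unfolding abel_continuous_def by blast
    then have "f y + e \<le> f y" by (rule abel_lower) (use z in auto)
    then show False using e by simp
  next
    case False
    then obtain d1 where d1: "d1 > 0" "\<And>z. \<bar>z - y\<bar> < d1 \<Longrightarrow> f z < f y + e"
      by (auto simp: not_le)
    have "\<exists>z. \<bar>z - y\<bar> < d \<and> f z \<le> f y - e" if dpos: "d > 0" for d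
    proof -
      obtain z where "\<bar>z - y\<bar> < min d d1" "\<bar>f z - f y\<bar> \<ge> e"
        using e(2)[of "min d d1"] dpos d1 by auto
      moreover have "f z < f y + e" using d1(2) calculation by auto
      ultimately show ?thesis by (intro exI[of _ z]) auto
    qed
    then obtain z where z: "z \<longlonglongrightarrow> y" "\<And>n. f (z n) \<le> f y - e"
      using seq_from_approx[of y "\<lambda>z. f z \<le> f y - e"] by blast
    have "abel_convergent_to (\<lambda>n. f (z n)) (f y)"
      using assms abel_of_convergent[OF z(1)] unfolding abel_continuous_def by blast
    then have "f y \<le> f y - e" by (rule abel_upper) (use z in auto)
    then show False using e by simp
  qed
qed



lemma sqrt_le_self: fixes r :: real assumes "1 \<le> r" shows "sqrt r \<le> r"
proof -
  have r1: "sqrt r \<ge> 1" using assms by simp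
  have "1 * sqrt r \<le> sqrt r * sqrt r" using r1 by (intro mult_right_mono) auto
  then show ?thesis using assms by simp
qed

lemma sum_inv_sqrt_le: "(\<Sum>k\<le>n. 1 / sqrt (real (max k 1))) \<le> 1 + 2 * sqrt (real n)"
proof (induction n)
  case 0 then show ?case by simp
next
  case (Suc n)
  have a: "1 / sqrt (real (Suc n)) \<le> 2 * sqrt (real (Suc n)) - 2 * sqrt (real n)"
  proof -
    define a where "a = sqrt (real (Suc n))"
    define b where "b = sqrt (real n)"
    have a0: "a > 0" unfolding a_def by simp
    have "0 \<le> (a - b)^2" by simp
    then have "2 * a * b \<le> a^2 + b^2" by (simp add: power2_eq_square algebra_simps)
    moreover have "a^2 = n + 1" "b^2 = n" unfolding a_def b_def by auto
    ultimately have "1 \<le> a * (2 * a - 2 * b)" by (simp add: algebra_simps power2_eq_square)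
    then show ?thesis using a0 unfolding a_def[symmetric] b_def[symmetric]
      by (simp add: field_simps)
  qed
  have "(\<Sum>k\<le>Suc n. 1 / sqrt (real (max k 1))) = (\<Sum>k\<le>n. 1 / sqrt (real (max k 1))) + 1 / sqrt (real (Suc n))"
    by simp
  also have "\<dots> \<le> 1 + 2 * sqrt (real (Suc n))" using Suc.IH a by linarith
  finally show ?case .
qed

lemma so_sqrt_bound:
  fixes p :: "nat \<Rightarrow> real"
  assumes "slowly_oscillating p"
  obtains C N' where "C > 0" "N' > 0"
    "\<And>k n. N' \<le> k \<Longrightarrow> k \<le> n \<Longrightarrow> \<bar>p n - p k\<bar> \<le> C * sqrt (real n / real k)"
proof -
  obtain \<delta> N where dN: "\<delta> > 0" "N > (0::nat)"
    "\<And>n m. n \<ge> N \<Longrightarrow> n \<le> m \<Longrightarrow> real m \<le> (1 + \<delta>) * real n \<Longrightarrow> \<bar>p m - p n\<bar> < 1"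
    using assms unfolding slowly_oscillating_def by (meson zero_less_one)
  define N' where "N' = max N (nat \<lceil>2 / \<delta>\<rceil>)"
  define \<rho> where "\<rho> = 1 + \<delta> / 2"
  define \<sigma> where "\<sigma> = sqrt \<rho>"
  define C where "C = 2 + \<sigma> / (\<sigma> - 1)"
  have \<sigma>1: "\<sigma> > 1" unfolding \<sigma>_def \<rho>_def using dN by simp
  have C2: "C \<ge> 2" unfolding C_def using \<sigma>1 by simp
  have Ckey: "C * (1 - 1 / \<sigma>) \<ge> 1"
  proof -
    have "C * (1 - 1 / \<sigma>) = 2 * (1 - 1/\<sigma>) + 1" unfolding C_def using \<sigma>1 by (simp add: field_simps)
    moreover have "1 / \<sigma> < 1" using \<sigma>1 by simp
    ultimately show ?thesis by simp
  qed
  have N'pos: "N' > 0" unfolding N'_def using dN by simp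
  have N'N: "N' \<ge> N" unfolding N'_def by simp
  have N'd: "real N' * \<delta> \<ge> 2"
  proof -
    have "real N' \<ge> 2 / \<delta>" unfolding N'_def by linarith
    then show ?thesis using dN by (simp add: field_simps)
  qed
  have main: "\<forall>k n. n = k + d \<longrightarrow> N' \<le> k \<longrightarrow> \<bar>p n - p k\<bar> \<le> C * sqrt (real n / real k) - 1" for d
  proof (induction d rule: less_induct)
    case (less d)
    show ?case
    proof (intro allI impI)
      fix k n assume nk: "n = k + d" and k: "N' \<le> k"
      have kpos: "real k > 0" using k N'pos by simp
      have r1: "sqrt (real n / real k) \<ge> 1" using nk kpos by simp
      show "\<bar>p n - p k\<bar> \<le> C * sqrt (real n / real k) - 1"
      proof (cases "real n \<le> (1 + \<delta>) * real k")
        case True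
        have "\<bar>p n - p k\<bar> < 1" using dN(3)[of k n] True k N'N nk by simp
        moreover have "C * 1 \<le> C * sqrt (real n / real k)" using r1 C2 by (intro mult_left_mono) auto
        ultimately show ?thesis using C2 by linarith
      next
        case False
        define m where "m = nat \<lfloor>(1 + \<delta>) * real k\<rfloor>"
        have y0: "(1 + \<delta>) * real k \<ge> 0" using kpos dN by simp
        have mf: "real m = of_int \<lfloor>(1 + \<delta>) * real k\<rfloor>" unfolding m_def using y0 by simp
        have m1: "real m \<le> (1 + \<delta>) * real k" unfolding mf by (rule of_int_floor_le)
        have "(1 + \<delta>) * real k < of_int \<lfloor>(1 + \<delta>) * real k\<rfloor> + 1"
          using floor_eq_iff by blast
        then have m2: "real m > (1 + \<delta>) * real k - 1" using mf by linarith
        have "real k * \<delta> \<ge> real N' * \<delta>" using k dN by (intro mult_right_mono) auto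
        then have "real k * \<delta> \<ge> 2" using N'd by linarith
        then have m3: "real m \<ge> \<rho> * real k" using m2 unfolding \<rho>_def by (simp add: algebra_simps)
        have "\<rho> * real k - real k = \<delta> / 2 * real k" unfolding \<rho>_def by (simp add: algebra_simps)
        moreover have "\<delta> / 2 * real k > 0" using kpos dN by simp
        ultimately have "real m > real k" using m3 by linarith
        then have mk: "m > k" by simp
        have mn: "m < n" using m1 False by linarith
        have IH: "\<bar>p n - p m\<bar> \<le> C * sqrt (real n / real m) - 1"
        proof -
          have lt: "n - m < d" using mk mn nk by simp
          show ?thesis using less[OF lt, rule_format, of n m] mk mn k by simp
        qed
        have step: "\<bar>p m - p k\<bar> < 1" using dN(3)[of k m] m1 mk k N'N by simp
        have mpos: "real m > 0" using mk by simp
        have "sqrt (real n / real m) \<le> sqrt (real n / (\<rho> * real k))"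
          using m3 mpos kpos dN unfolding \<rho>_def by (intro real_sqrt_le_mono divide_left_mono) auto
        also have "\<dots> = sqrt (real n / real k) / \<sigma>" unfolding \<sigma>_def by (simp add: real_sqrt_divide real_sqrt_mult)
        finally have sq: "sqrt (real n / real m) \<le> sqrt (real n / real k) / \<sigma>" .
        define r where "r = sqrt (real n / real k)"
        have "(C * (1 - 1/\<sigma>)) * r \<ge> 1 * 1" using Ckey r1 unfolding r_def
          by (intro mult_mono) auto
        then have "C * r * (1 - 1/\<sigma>) \<ge> 1 * 1" by (simp add: algebra_simps)
        then have key: "C * (r / \<sigma>) \<le> C * r - 1" by (simp add: algebra_simps)
        have "C * sqrt (real n / real m) \<le> C * (r / \<sigma>)" using sq C2 unfolding r_def by (intro mult_left_mono) auto
        then show ?thesis using IH step key unfolding r_def by linarith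
      qed
    qed
  qed
  show ?thesis
  proof (rule that[of C N'])
    show "C > 0" "N' > 0" using C2 N'pos by auto
    fix k n assume "N' \<le> k" "k \<le> n"
    then show "\<bar>p n - p k\<bar> \<le> C * sqrt (real n / real k)"
      using main[of "n - k"] by force
  qed
qed


lemma abel_shift:
  fixes p :: "nat \<Rightarrow> real"
  assumes "summable (\<lambda>k. p k * x^k)" "0 \<le> x" "x < 1"
  shows "(1 - x) * (\<Sum>k. p k * x ^ k) - c = (1 - x) * (\<Sum>k. (p k - c) * x ^ k)"
proof -
  have a2: "summable (\<lambda>k. c * x^k)" using geom_sum_mult[of x c] assms by simp
  have "(\<Sum>k. (p k - c) * x ^ k) = (\<Sum>k. p k * x ^ k) - (\<Sum>k. c * x ^ k)"
    using suminf_diff[OF assms(1) a2] by (simp add: left_diff_distrib)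
  then show ?thesis using geom_sum_mult[of x c] assms by (simp add: field_simps)
qed

lemma inv_n_filterlim: "filterlim (\<lambda>n::nat. 1 - 1 / real n) (at_left 1) sequentially"
proof (rule tendsto_imp_filterlim_at_left)
  show "((\<lambda>n::nat. 1 - 1 / real n) \<longlongrightarrow> 1) sequentially"
    using tendsto_diff[OF tendsto_const[of "1::real"] lim_inverse_n] by (simp add: divide_inverse)
  show "eventually (\<lambda>n::nat. 1 - 1 / real n < 1) sequentially"
    using eventually_gt_at_top[of 0] by eventually_elim simp
qed

lemma so_abel_bounded:
  fixes p :: "nat \<Rightarrow> real"
  assumes so: "slowly_oscillating p" and ab: "abel_convergent_to p l"
  obtains M where "\<And>k. \<bar>p k\<bar> \<le> M"
proof -
  obtain C N' where CN: "C > 0" "N' > 0"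
    "\<And>k n. N' \<le> k \<Longrightarrow> k \<le> n \<Longrightarrow> \<bar>p n - p k\<bar> \<le> C * sqrt (real n / real k)"
    using so_sqrt_bound[OF so] by blast
  define D where "D = (\<Sum>j<N'. \<bar>p j - p N'\<bar>)"
  have D0: "D \<ge> 0" unfolding D_def by (intro sum_nonneg) auto
  have Dj: "\<bar>p j - p N'\<bar> \<le> D" if "j < N'" for j
    unfolding D_def using that by (intro member_le_sum) auto
  have sm: "summable (\<lambda>k. p k * x^k)" if "0 \<le> x" "x < 1" for x
    using ab that unfolding abel_convergent_to_def by blast
  have key: "\<bar>(1 - (1 - 1/real n)) * (\<Sum>k. p k * (1 - 1/real n) ^ k) - p n\<bar> \<le> D + 6 * C"
    if n: "n \<ge> N'" for n
  proof -
    define x where "x = 1 - 1 / real n"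
    have npos: "real n > 0" using n CN by simp
    have n1: "real n \<ge> 1" using n CN by simp
    have x: "0 \<le> x" "x < 1" "1 - x = 1 / real n" unfolding x_def using n1 by (auto simp: field_simps)
    have xk: "0 \<le> x^k" "x^k \<le> 1" for k using x by (auto simp: power_le_one)
    define g2 where "g2 k = (if k \<le> n then sqrt (real n) / sqrt (real (max k 1)) else 0)" for k
    define b where "b k = (D + 2 * C) * x^k + C * g2 k + (C / real n) * (real (Suc k) * x^k)" for k
    have g20: "g2 k \<ge> 0" for k unfolding g2_def by auto
    have pw: "\<bar>(p k - p n) * x^k\<bar> \<le> b k" for k
    proof -
      have t1: "0 \<le> (D + 2 * C) * x^k" using D0 CN xk by simp
      have t2: "0 \<le> C * g2 k" using CN g20 by simp
      have t3: "0 \<le> (C / real n) * (real (Suc k) * x^k)" using CN npos xk by simp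
      have ab1: "\<bar>(p k - p n) * x^k\<bar> = \<bar>p k - p n\<bar> * x^k" using xk by (simp add: abs_mult)
      have bk: "b k = D * x^k + 2 * C * x^k + C * g2 k + (C / real n) * (real (Suc k) * x^k)"
        unfolding b_def by (simp add: algebra_simps)
      have t4: "0 \<le> D * x^k" "0 \<le> 2 * C * x^k" using D0 CN xk by auto
      consider "k < N'" | "N' \<le> k" "k \<le> n" | "n < k" by linarith
      then show ?thesis
      proof cases
        case 1
        have q: "\<bar>p k - p n\<bar> \<le> D + C * sqrt (real n / real N')"
          using Dj[OF 1] CN(3)[of N' n] n by linarith
        have "sqrt (real n / real N') \<le> g2 k"
        proof -
          have "real (max k 1) \<le> real N'" using 1 CN by simp
          moreover have "real (max k 1) > 0" by simp
          ultimately have "sqrt (real n) / sqrt (real N') \<le> sqrt (real n) / sqrt (real (max k 1))"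
            by (intro divide_left_mono) (auto simp: mult_pos_pos)
          then show ?thesis unfolding g2_def using 1 n by (simp add: real_sqrt_divide)
        qed
        then have q2: "\<bar>p k - p n\<bar> \<le> D + C * g2 k" using q CN by (smt (verit) mult_left_mono)
        have "\<bar>p k - p n\<bar> * x^k \<le> (D + C * g2 k) * x^k" using q2 xk by (intro mult_right_mono) auto
        also have "\<dots> = D * x^k + C * g2 k * x^k" by (simp add: algebra_simps)
        also have "\<dots> \<le> D * x^k + C * g2 k" using mult_left_le[OF xk(2) t2] by simp
        finally show ?thesis using ab1 t2 t3 t4 bk by linarith
      next
        case 2
        have q: "\<bar>p k - p n\<bar> \<le> C * g2 k"
        proof -
          have "\<bar>p n - p k\<bar> \<le> C * sqrt (real n / real k)" using CN(3) 2 by blast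
          moreover have "sqrt (real n / real k) = g2 k" unfolding g2_def using 2 CN
            by (simp add: real_sqrt_divide max_def)
          ultimately show ?thesis by (simp add: abs_minus_commute)
        qed
        have "\<bar>p k - p n\<bar> * x^k \<le> C * g2 k * x^k" using q xk by (intro mult_right_mono) auto
        also have "\<dots> \<le> C * g2 k" by (rule mult_left_le[OF xk(2) t2])
        finally show ?thesis using ab1 t2 t3 t4 bk by linarith
      next
        case 3
        have "\<bar>p k - p n\<bar> \<le> C * sqrt (real k / real n)" using CN(3)[of n k] n 3 by simp
        also have "sqrt (real k / real n) \<le> 1 + real k / real n"
        proof -
          have r0: "real k / real n \<ge> 0" by simp
          show ?thesis
          proof (cases "real k / real n \<le> 1")
            case True
            then have "sqrt (real k / real n) \<le> 1" by simp
            then show ?thesis using r0 by linarith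
          next
            case False
            define r where "r = real k / real n"
            have r1: "sqrt r \<ge> 1" using False unfolding r_def by simp
            have "1 * sqrt r \<le> sqrt r * sqrt r" using r1 by (intro mult_right_mono) auto
            then have "sqrt (real k / real n) \<le> real k / real n" using r0 unfolding r_def by simp
            then show ?thesis by simp
          qed
        qed
        then have "C * sqrt (real k / real n) \<le> C * (1 + real k / real n)" using CN by simp
        finally have q: "\<bar>p k - p n\<bar> \<le> C + (C / real n) * real k" by (simp add: algebra_simps)
        have "\<bar>p k - p n\<bar> * x^k \<le> (C + (C / real n) * real k) * x^k" using q xk by (intro mult_right_mono) auto
        also have "\<dots> \<le> 2 * C * x^k + (C / real n) * (real (Suc k) * x^k)"
          using CN xk npos by (simp add: algebra_simps)
        finally show ?thesis using ab1 t2 t3 t4 bk by linarith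
      qed
    qed
    have s1: "summable (\<lambda>k. x^k)" and v1: "(\<Sum>k. x^k) = real n"
      using geom_sum_mult[of x 1] x by auto
    have s2: "summable g2" by (rule summable_finite[of "{..n}"]) (auto simp: g2_def)
    have v2: "suminf g2 = (\<Sum>k\<le>n. g2 k)" by (rule suminf_finite) (auto simp: g2_def)
    have d3: "(\<lambda>k. real (Suc k) * x^k) sums (1 / (1 - x)^2)"
      using geometric_deriv_sums[of x] x by simp
    have s3: "summable (\<lambda>k. real (Suc k) * x^k)" and v3: "(\<Sum>k. real (Suc k) * x^k) = real n ^ 2"
      using d3 x by (auto simp: sums_iff power_divide)
    have sb: "summable b" unfolding b_def
      by (intro summable_add summable_mult s1 s2 s3)
    have vb: "suminf b = (D + 2 * C) * real n + C * (\<Sum>k\<le>n. g2 k) + C * real n"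
    proof -
      have "suminf b = (\<Sum>k. (D + 2 * C) * x^k + C * g2 k) + (\<Sum>k. (C / real n) * (real (Suc k) * x^k))"
        unfolding b_def by (intro suminf_add[symmetric] summable_add summable_mult s1 s2 s3)
      also have "(\<Sum>k. (D + 2 * C) * x^k + C * g2 k) = (\<Sum>k. (D + 2 * C) * x^k) + (\<Sum>k. C * g2 k)"
        by (intro suminf_add[symmetric] summable_mult s1 s2)
      moreover have "(\<Sum>k. (C / real n) * (real (Suc k) * x^k)) = C * real n"
        unfolding suminf_mult[OF s3] v3 using npos by (simp add: power2_eq_square)
      moreover have "(\<Sum>k. (D + 2 * C) * x^k) = (D + 2 * C) * real n"
        unfolding suminf_mult[OF s1] v1 ..
      moreover have "(\<Sum>k. C * g2 k) = C * (\<Sum>k\<le>n. g2 k)"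
        unfolding suminf_mult[OF s2] v2 ..
      ultimately show ?thesis by simp
    qed
    have g2s: "(\<Sum>k\<le>n. g2 k) \<le> sqrt (real n) + 2 * real n"
    proof -
      have "(\<Sum>k\<le>n. g2 k) = sqrt (real n) * (\<Sum>k\<le>n. 1 / sqrt (real (max k 1)))"
        unfolding g2_def sum_distrib_left by simp
      also have "\<dots> \<le> sqrt (real n) * (1 + 2 * sqrt (real n))"
        by (intro mult_left_mono sum_inv_sqrt_le) auto
      also have "\<dots> = sqrt (real n) + 2 * real n" by (simp add: algebra_simps)
      finally show ?thesis .
    qed
    have sqn: "sqrt (real n) \<le> real n" using n1 by (rule sqrt_le_self)
    have "suminf b \<le> real n * (D + 6 * C)"
    proof -
      have "C * (\<Sum>k\<le>n. g2 k) \<le> C * (sqrt (real n) + 2 * real n)" using g2s CN by simp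
      also have "\<dots> \<le> C * (3 * real n)" using sqn CN by simp
      finally show ?thesis using vb by (simp add: algebra_simps)
    qed
    note sd = abs_suminf_le[of "\<lambda>k. (p k - p n) * x^k" b, OF pw sb]
    have "\<bar>(1 - x) * (\<Sum>k. p k * x ^ k) - p n\<bar> = (1 - x) * \<bar>\<Sum>k. (p k - p n) * x ^ k\<bar>"
      using abel_shift[OF sm[OF x(1,2)] x(1,2)] x by (simp add: abs_mult)
    also have "\<dots> \<le> (1 - x) * suminf b" using sd(2) x by (intro mult_left_mono) auto
    also have "\<dots> \<le> (1 - x) * (real n * (D + 6 * C))"
      using \<open>suminf b \<le> _\<close> x by (intro mult_left_mono) auto
    also have "\<dots> = D + 6 * C" using x npos by simp
    finally show ?thesis unfolding x_def .
  qed
  have lim: "((\<lambda>n. (1 - (1 - 1/real n)) * (\<Sum>k. p k * (1 - 1/real n) ^ k)) \<longlongrightarrow> l) sequentially"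
    using filterlim_compose[OF ab[unfolded abel_convergent_to_def, THEN conjunct2] inv_n_filterlim] .
  have "eventually (\<lambda>n. dist ((1 - (1 - 1/real n)) * (\<Sum>k. p k * (1 - 1/real n) ^ k)) l < 1) sequentially"
    using tendstoD[OF lim, of 1] by simp
  then have "eventually (\<lambda>n. norm (p n) \<le> norm (\<bar>l\<bar> + 1 + D + 6 * C)) sequentially"
    using eventually_ge_at_top[of N']
  proof eventually_elim
    case (elim n)
    then show ?case using key[OF elim(2)] D0 CN by (simp add: dist_real_def)
  qed
  then have "Bseq p" by (rule Bseq_eventually_mono) simp
  then obtain K where "\<forall>n. norm (p n) \<le> K" by (auto elim!: BseqE)
  then show ?thesis using that by auto
qed



lemma poly_series_identity:
  fixes s :: "nat \<Rightarrow> real"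
  assumes sm: "\<And>y. 0 \<le> y \<Longrightarrow> y < 1 \<Longrightarrow> summable (\<lambda>k. s k * y^k)" and x: "0 \<le> x" "x < 1"
  shows "(\<Sum>k. s k * x^k * (\<Sum>i\<le>d. c i * (x^k)^i)) = (\<Sum>i\<le>d. c i * (\<Sum>k. s k * (x^Suc i)^k))"
proof -
  have eq: "s k * x^k * (\<Sum>i\<le>d. c i * (x^k)^i) = (\<Sum>i\<le>d. c i * (s k * (x^Suc i)^k))" for k
  proof -
    have pw: "x^k * (x^k)^i = (x^Suc i)^k" for i
    proof -
      have "(x^Suc i)^k = (x^k)^Suc i" by (metis power_mult mult.commute)
      then show ?thesis by simp
    qed
    show ?thesis unfolding sum_distrib_left
      by (intro sum.cong refl) (simp only: pw[symmetric], simp add: algebra_simps)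
  qed
  have yi: "0 \<le> x^Suc i" "x^Suc i < 1" for i
    using x power_strict_mono[of x 1 "Suc i"] by auto
  have "(\<Sum>k. s k * x^k * (\<Sum>i\<le>d. c i * (x^k)^i)) = (\<Sum>k. \<Sum>i\<le>d. c i * (s k * (x^Suc i)^k))"
    unfolding eq ..
  also have "\<dots> = (\<Sum>i\<le>d. \<Sum>k. c i * (s k * (x^Suc i)^k))"
    by (rule suminf_sum) (intro summable_mult sm yi)
  also have "\<dots> = (\<Sum>i\<le>d. c i * (\<Sum>k. s k * (x^Suc i)^k))"
    by (intro sum.cong refl suminf_mult) (intro sm yi)
  finally show ?thesis .
qed

lemma poly_abel_diff:
  fixes s :: "nat \<Rightarrow> real"
  assumes sm: "\<And>y. 0 \<le> y \<Longrightarrow> y < 1 \<Longrightarrow> summable (\<lambda>k. s k * y^k)" and x: "0 < x" "x < 1"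
  shows "(1 - x) * (\<Sum>k. s k * x^k * (\<Sum>i\<le>d. c i * (x^k)^i)) - l * ((1 - x) * (\<Sum>k. 1 * x^k * (\<Sum>i\<le>d. c i * (x^k)^i)))
       = (\<Sum>i\<le>d. c i * ((1 - x) / (1 - x^Suc i)) * ((1 - x^Suc i) * (\<Sum>k. s k * (x^Suc i)^k) - l))"
proof -
  have sm1: "summable (\<lambda>k. 1 * y^k)" if "0 \<le> y" "y < 1" for y :: real using that by simp
  have yi: "0 \<le> x^Suc i" "x^Suc i < 1" for i
    using x power_strict_mono[of x 1 "Suc i"] by auto
  have g: "(\<Sum>k. 1 * (x^Suc i)^k) = 1 / (1 - x^Suc i)" for i
    using yi[of i] by (simp add: suminf_geometric)
  note e1 = poly_series_identity[OF sm x(1)[THEN less_imp_le] x(2), where d=d and c=c]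
  note e2 = poly_series_identity[OF sm1 x(1)[THEN less_imp_le] x(2), where d=d and c=c]
  have "(1 - x) * (\<Sum>k. s k * x^k * (\<Sum>i\<le>d. c i * (x^k)^i)) - l * ((1 - x) * (\<Sum>k. 1 * x^k * (\<Sum>i\<le>d. c i * (x^k)^i)))
     = (1 - x) * (\<Sum>i\<le>d. c i * (\<Sum>k. s k * (x^Suc i)^k)) - l * ((1 - x) * (\<Sum>i\<le>d. c i * (1 / (1 - x^Suc i))))"
    by (simp only: e1 e2 g)
  also have "\<dots> = (\<Sum>i\<le>d. c i * ((1 - x) / (1 - x^Suc i)) * ((1 - x^Suc i) * (\<Sum>k. s k * (x^Suc i)^k) - l))"
    unfolding sum_distrib_left sum_subtractf[symmetric]
  proof (intro sum.cong refl)
    fix i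
    have "1 - x^Suc i > 0" using yi[of i] by simp
    then show "(1 - x) * (c i * (\<Sum>k. s k * (x ^ Suc i) ^ k)) - l * ((1 - x) * (c i * (1 / (1 - x ^ Suc i)))) =
         c i * ((1 - x) / (1 - x ^ Suc i)) * ((1 - x ^ Suc i) * (\<Sum>k. s k * (x ^ Suc i) ^ k) - l)"
      by (simp add: field_simps)
  qed
  finally show ?thesis .
qed


lemma pow_filterlim: "filterlim (\<lambda>x::real. x^Suc i) (at_left 1) (at_left 1)"
proof (rule tendsto_imp_filterlim_at_left)
  show "((\<lambda>x::real. x^Suc i) \<longlongrightarrow> 1) (at_left 1)"
    using tendsto_power[OF tendsto_ident_at[of 1 "{..<1::real}"], of "Suc i"] by simp
  show "eventually (\<lambda>x::real. x^Suc i < 1) (at_left 1)"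
    using ev_at_left_1 by eventually_elim (intro power_Suc_less_one, auto)
qed

lemma poly_abel_tendsto:
  fixes s :: "nat \<Rightarrow> real"
  assumes ab: "abel_convergent_to s l"
  shows "((\<lambda>x. \<Sum>i\<le>d. c i * ((1 - x) / (1 - x^Suc i)) * ((1 - x^Suc i) * (\<Sum>k. s k * (x^Suc i)^k) - l)) \<longlongrightarrow> 0) (at_left 1)"
proof (rule tendsto_null_sum)
  fix i
  have A: "((\<lambda>x. (1 - x) * (\<Sum>k. s k * x^k)) \<longlongrightarrow> l) (at_left 1)"
    using ab unfolding abel_convergent_to_def by blast
  have "((\<lambda>x. (1 - x^Suc i) * (\<Sum>k. s k * (x^Suc i)^k)) \<longlongrightarrow> l) (at_left 1)"
    using filterlim_compose[OF A pow_filterlim] .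
  then have L0: "((\<lambda>x. (1 - x^Suc i) * (\<Sum>k. s k * (x^Suc i)^k) - l) \<longlongrightarrow> 0) (at_left 1)"
    by (rule LIM_zero)
  have L1: "((\<lambda>x. \<bar>c i\<bar> * \<bar>(1 - x^Suc i) * (\<Sum>k. s k * (x^Suc i)^k) - l\<bar>) \<longlongrightarrow> 0) (at_left 1)"
    using tendsto_mult_right_zero[OF tendsto_rabs_zero[OF L0], of "\<bar>c i\<bar>"] by simp
  show "((\<lambda>x. c i * ((1 - x) / (1 - x^Suc i)) * ((1 - x^Suc i) * (\<Sum>k. s k * (x^Suc i)^k) - l)) \<longlongrightarrow> 0) (at_left 1)"
  proof (rule Lim_null_comparison[OF _ L1])
    show "eventually (\<lambda>x. norm (c i * ((1 - x) / (1 - x^Suc i)) * ((1 - x^Suc i) * (\<Sum>k. s k * (x^Suc i)^k) - l))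
       \<le> \<bar>c i\<bar> * \<bar>(1 - x^Suc i) * (\<Sum>k. s k * (x^Suc i)^k) - l\<bar>) (at_left 1)"
      using ev_at_left_1
    proof eventually_elim
      case (elim x)
      have "x^Suc i \<le> x" using elim by (simp add: mult_left_le_one_le power_le_one)
      then have q: "0 \<le> (1 - x) / (1 - x^Suc i)" "(1 - x) / (1 - x^Suc i) \<le> 1"
        using elim power_Suc_less_one[of x i] by auto
      define Q where "Q = (1 - x) / (1 - x^Suc i)"
      define R where "R = (1 - x^Suc i) * (\<Sum>k. s k * (x^Suc i)^k) - l"
      have "\<bar>c i * Q * R\<bar> = \<bar>c i\<bar> * \<bar>R\<bar> * Q" using q unfolding Q_def[symmetric] by (simp add: abs_mult)
      also have "\<dots> \<le> \<bar>c i\<bar> * \<bar>R\<bar> * 1" using q unfolding Q_def[symmetric] by (intro mult_left_mono) auto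
      finally show ?case unfolding Q_def R_def by simp
    qed
  qed
qed



definition Gb :: "real \<Rightarrow> real \<Rightarrow> real" where
  "Gb \<delta> u = max 0 (min (u - 1) (1 + \<delta> - u))"

definition gb :: "real \<Rightarrow> real \<Rightarrow> real" where
  "gb \<delta> t = Gb \<delta> (- ln (max t (exp (-3))))"

lemma Gb_nonneg: "Gb \<delta> u \<ge> 0" unfolding Gb_def by simp

lemma Gb_le1: "\<delta> \<le> 1 \<Longrightarrow> Gb \<delta> u \<le> 1" unfolding Gb_def by auto

lemma Gb_support: "Gb \<delta> u \<noteq> 0 \<Longrightarrow> 1 < u \<and> u < 1 + \<delta>" unfolding Gb_def by auto

lemma gb_cont: "continuous_on UNIV (gb \<delta>)"
proof -
  have "continuous_on UNIV (\<lambda>t. max 0 (min (- ln (max t (exp (-3))) - 1) (1 + \<delta> - - ln (max t (exp (-3))))))"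
    by (intro continuous_intros) (auto simp: max_def)
  then show ?thesis unfolding gb_def Gb_def by simp
qed

lemma gb_exp:
  assumes "\<delta> \<le> 1" "n > 0"
  shows "gb \<delta> (exp (- 1 / real n) ^ k) = Gb \<delta> (real k / real n)"
proof -
  have e: "exp (- 1 / real n) ^ k = exp (- (real k / real n))"
    using exp_of_nat_mult[of k "- 1 / real n", symmetric] by simp
  show ?thesis
  proof (cases "real k / real n \<le> 3")
    case True
    then have "max (exp (- (real k / real n))) (exp (-3)) = exp (- (real k / real n))" by simp
    then show ?thesis unfolding gb_def e by simp
  next
    case False
    then have "max (exp (- (real k / real n))) (exp (-3)) = exp (-3)" by simp
    then have "gb \<delta> (exp (- 1 / real n) ^ k) = Gb \<delta> 3" unfolding gb_def e by simp
    also have "\<dots> = 0" using assms unfolding Gb_def by simp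
    also have "\<dots> = Gb \<delta> (real k / real n)" using assms False unfolding Gb_def by simp
    finally show ?thesis .
  qed
qed

lemma exp_filterlim: "filterlim (\<lambda>n::nat. exp (- 1 / real n)) (at_left 1) sequentially"
proof (rule tendsto_imp_filterlim_at_left)
  have "((\<lambda>n::nat. - 1 / real n) \<longlongrightarrow> - 0) sequentially"
    using tendsto_minus[OF lim_inverse_n] by (simp add: divide_inverse)
  from tendsto_exp[OF this] show "((\<lambda>n::nat. exp (- 1 / real n)) \<longlongrightarrow> 1) sequentially" by simp
  show "eventually (\<lambda>n::nat. exp (- 1 / real n) < 1) sequentially"
    using eventually_gt_at_top[of 0] by eventually_elim simp
qed

lemma bsum2:
  fixes a h :: "nat \<Rightarrow> real"
  assumes "\<And>k. \<bar>a k\<bar> \<le> A" "\<And>k. \<bar>h k\<bar> \<le> H" "0 \<le> x" "x < 1"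
  shows "summable (\<lambda>k. a k * x^k * h k)"
proof (rule abs_suminf_le(1)[of _ "\<lambda>k. (A * H) * x^k"])
  show "summable (\<lambda>k. (A * H) * x^k)" using geom_sum_mult assms by blast
  fix k
  have "\<bar>a k * x ^ k * h k\<bar> = \<bar>a k\<bar> * \<bar>h k\<bar> * x^k" using assms by (simp add: abs_mult)
  also have "\<dots> \<le> A * H * x^k"
  proof -
    have A0: "0 \<le> A" using assms(1)[of 0] abs_ge_zero[of "a 0"] by linarith
    show ?thesis using assms A0 by (intro mult_right_mono mult_mono) auto
  qed
  finally show "\<bar>a k * x ^ k * h k\<bar> \<le> (A * H) * x^k" .
qed

lemma one_minus_exp_bound:
  assumes "n > 0"
  shows "1 - exp (- 1 / real n) \<ge> 1 / (2 * real n)"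
proof -
  have "1 + 1 / real n \<le> exp (1 / real n)" by (rule exp_ge_add_one_self)
  then have "inverse (exp (1 / real n)) \<le> inverse (1 + 1 / real n)"
    by (rule le_imp_inverse_le) (simp add: add_pos_nonneg)
  then have "exp (- 1 / real n) \<le> 1 / (1 + 1 / real n)"
    by (simp add: exp_minus[symmetric] divide_inverse)
  also have "\<dots> = real n / (real n + 1)" using assms by (simp add: field_simps)
  finally have "1 - exp (- 1 / real n) \<ge> 1 - real n / (real n + 1)" by simp
  also have "1 - real n / (real n + 1) = 1 / (real n + 1)" by (simp add: field_simps)
  also have "1 / (real n + 1) \<ge> 1 / (2 * real n)" using assms by (intro divide_left_mono) auto
  finally show ?thesis .
qed


lemma Mg_lower:
  fixes q n :: nat
  assumes d: "0 < \<delta>" "\<delta> \<le> 1" and q: "real q \<ge> 4 / \<delta>" and n: "n \<ge> 2 * q"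
  shows "(1 - exp (- 1 / real n)) * (\<Sum>k. exp (- 1 / real n) ^ k * gb \<delta> (exp (- 1 / real n) ^ k))
           \<ge> exp (-2) / (4 * real q ^ 2)"
proof -
  define x where "x = exp (- 1 / real n)"
  have "4 / \<delta> \<ge> 4" using d by (simp add: field_simps)
  then have q4: "real q \<ge> 4" using q by linarith
  have qpos: "real q > 0" using q4 by simp
  have npos: "n > 0" using n q4 by simp
  have x: "0 \<le> x" "x < 1" unfolding x_def using npos by auto
  define t where "t k = x^k * gb \<delta> (x^k)" for k
  have tk: "t k = exp (- (real k / real n)) * Gb \<delta> (real k / real n)" for k
  proof -
    have "x^k = exp (- (real k / real n))" unfolding x_def
      using exp_of_nat_mult[of k "- 1 / real n", symmetric] by simp
    then show ?thesis unfolding t_def using gb_exp[OF d(2) npos, of k] unfolding x_def by simp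
  qed
  have t0: "t k \<ge> 0" for k unfolding tk using Gb_nonneg by simp
  have st: "summable t" unfolding t_def
    using bsum2[of "\<lambda>_. 1" 1 "\<lambda>k. gb \<delta> (x^k)" 1 x] x Gb_le1[OF d(2)] Gb_nonneg
    by (simp add: gb_def)
  define m where "m = n div q"
  have qm: "real q * real m \<le> real n" "real n < real q * (real m + 1)"
  proof -
    have e: "n div q * q + n mod q = n" by (rule div_mult_mod_eq)
    have r: "n mod q < q" using qpos by simp
    have a1: "m * q \<le> n" "n < m * q + q" unfolding m_def using e r by linarith+
    have "real (m * q) \<le> real n" "real n < real (m * q + q)" using a1 by (simp only: of_nat_le_iff of_nat_less_iff)+
    then show "real q * real m \<le> real n" "real n < real q * (real m + 1)"
      by (simp_all add: algebra_simps)
  qed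
  define K where "K = {n + m..n + 2 * m}"
  have cardK: "card K = m + 1" unfolding K_def by simp
  have lb: "t k \<ge> exp (-2) * (1 / (2 * real q))" if "k \<in> K" for k
  proof -
    define u where "u = real k / real n"
    have k1: "real n + real m \<le> real k" "real k \<le> real n + 2 * real m" using that unfolding K_def by auto
    have mn1: "real m / real n \<le> 1 / real q" using qm qpos npos by (simp add: field_simps)
    have mn2: "real m / real n \<ge> 1 / (2 * real q)"
    proof -
      have "real n < real q * real m + real q" using qm by (simp add: algebra_simps)
      moreover have "real q \<le> real n / 2" using n by simp
      ultimately have "real n / 2 \<le> real q * real m" by linarith
      then show ?thesis using qpos npos by (simp add: field_simps)
    qed
    have u1: "u \<ge> 1 + 1 / (2 * real q)"
    proof -
      have "u \<ge> (real n + real m) / real n" unfolding u_def using k1 npos by (intro divide_right_mono) auto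
      also have "(real n + real m) / real n = 1 + real m / real n" using npos by (simp add: field_simps)
      finally show ?thesis using mn2 by linarith
    qed
    have u2: "u \<le> 1 + 2 / real q"
    proof -
      have "u \<le> (real n + 2 * real m) / real n" unfolding u_def using k1 npos by (intro divide_right_mono) auto
      also have "(real n + 2 * real m) / real n = 1 + 2 * (real m / real n)" using npos by (simp add: field_simps)
      finally show ?thesis using mn1 by simp
    qed
    have dq: "\<delta> \<ge> 4 / real q" using q d qpos by (simp add: field_simps)
    have G: "Gb \<delta> u \<ge> 1 / (2 * real q)"
    proof -
      have "1 / (2 * real q) \<le> 2 / real q" using qpos by (simp add: field_simps)
      then show ?thesis unfolding Gb_def using u1 u2 dq by auto
    qed
    have "2 / real q \<le> 1" using q4 by simp
    then have "exp (- u) \<ge> exp (-2)" using u2 by simp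
    then have "exp (- u) * Gb \<delta> u \<ge> exp (-2) * (1 / (2 * real q))"
      using G qpos by (intro mult_mono) auto
    then show ?thesis unfolding tk u_def .
  qed
  have "(\<Sum>k\<in>K. t k) \<le> suminf t" using st t0 unfolding K_def by (intro sum_le_suminf) auto
  moreover have "(\<Sum>k\<in>K. t k) \<ge> real (card K) * (exp (-2) * (1 / (2 * real q)))"
    using lb by (metis sum_bounded_below)
  ultimately have S: "suminf t \<ge> (real m + 1) * (exp (-2) * (1 / (2 * real q)))" using cardK
    by (simp add: add.commute)
  have m1: "real m + 1 \<ge> real n / real q" using qm qpos by (simp add: field_simps)
  have "(1 - x) * suminf t \<ge> (1 / (2 * real n)) * ((real n / real q) * (exp (-2) * (1 / (2 * real q))))"
  proof (intro mult_mono)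
    show "1 / (2 * real n) \<le> 1 - x" unfolding x_def using one_minus_exp_bound[OF npos] .
    show "real n / real q * (exp (- 2) * (1 / (2 * real q))) \<le> suminf t"
    proof -
      have "real n / real q * (exp (- 2) * (1 / (2 * real q))) \<le> (real m + 1) * (exp (- 2) * (1 / (2 * real q)))"
        using m1 qpos by (intro mult_right_mono) auto
      then show ?thesis using S by linarith
    qed
  qed (use x qpos npos in auto)
  also have "(1 / (2 * real n)) * ((real n / real q) * (exp (-2) * (1 / (2 * real q)))) = exp (-2) / (4 * real q ^ 2)"
    using npos qpos by (simp add: field_simps power2_eq_square)
  finally show ?thesis unfolding t_def x_def .
qed



lemma abs3: "\<bar>a + b + c\<bar> \<le> \<bar>a\<bar> + \<bar>b\<bar> + \<bar>c\<bar>" for a b c :: real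
  by (simp add: abs_if)

lemma tauberian:
  fixes s :: "nat \<Rightarrow> real"
  assumes so: "slowly_oscillating s" and ab: "abel_convergent_to s l"
  shows "s \<longlonglongrightarrow> l"
proof -
  obtain M0 where M0: "\<And>k. \<bar>s k\<bar> \<le> M0" using so_abel_bounded[OF so ab] by blast
  define M where "M = max M0 1"
  have M: "M > 0" "\<And>k. \<bar>s k\<bar> \<le> M" unfolding M_def using M0 by (auto simp: le_max_iff_disj)
  have sm: "\<And>y. 0 \<le> y \<Longrightarrow> y < 1 \<Longrightarrow> summable (\<lambda>k. s k * y^k)"
    using ab unfolding abel_convergent_to_def by blast
  have main: "eventually (\<lambda>n. \<bar>s n - l\<bar> \<le> 2 * \<epsilon>) sequentially" if \<epsilon>: "\<epsilon> > 0" for \<epsilon>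
  proof -
    obtain \<delta>0 N0 where \<delta>N: "\<delta>0 > 0" "N0 > (0::nat)"
      "\<And>n m. n \<ge> N0 \<Longrightarrow> n \<le> m \<Longrightarrow> real m \<le> (1 + \<delta>0) * real n \<Longrightarrow> \<bar>s m - s n\<bar> < \<epsilon>"
      using so \<epsilon> unfolding slowly_oscillating_def by meson
    define \<delta> where "\<delta> = min \<delta>0 1"
    have \<delta>: "0 < \<delta>" "\<delta> \<le> 1" "\<delta> \<le> \<delta>0" unfolding \<delta>_def using \<delta>N by auto
    define q where "q = nat \<lceil>4 / \<delta>\<rceil>"
    have q: "real q \<ge> 4 / \<delta>" unfolding q_def by (rule real_nat_ceiling_ge)
    have "4 / \<delta> > 0" using \<delta> by simp
    then have qpos: "real q > 0" using q by linarith
    define LB where "LB = exp (-2) / (4 * real q ^ 2)"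
    have LB: "LB > 0" unfolding LB_def using qpos by simp
    define \<eta> where "\<eta> = min 1 (\<epsilon> * LB / (M + \<bar>l\<bar> + 1))"
    have \<eta>: "\<eta> > 0" "\<eta> \<le> 1" "(M + \<bar>l\<bar> + 1) * \<eta> \<le> \<epsilon> * LB"
    proof -
      have den: "M + \<bar>l\<bar> + 1 > 0" using M by simp
      show "\<eta> > 0" unfolding \<eta>_def using \<epsilon> LB den by simp
      show "\<eta> \<le> 1" unfolding \<eta>_def by simp
      have "\<eta> \<le> \<epsilon> * LB / (M + \<bar>l\<bar> + 1)" unfolding \<eta>_def by simp
      then have "(M + \<bar>l\<bar> + 1) * \<eta> \<le> (M + \<bar>l\<bar> + 1) * (\<epsilon> * LB / (M + \<bar>l\<bar> + 1))"
        using den by (intro mult_left_mono) auto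
      then show "(M + \<bar>l\<bar> + 1) * \<eta> \<le> \<epsilon> * LB" using den by simp
    qed
    obtain P where P: "real_polynomial_function P" "\<And>t. t \<in> {0..1} \<Longrightarrow> \<bar>gb \<delta> t - P t\<bar> < \<eta>"
      using Stone_Weierstrass_real_polynomial_function[of "{0..1::real}" "gb \<delta>" \<eta>]
        compact_Icc continuous_on_subset[OF gb_cont] \<eta>(1) by blast
    obtain c d where Pc: "P = (\<lambda>t. \<Sum>i\<le>d. c i * t^i)" using P(1) real_polynomial_function_iff_sum by blast
    define Lg where "Lg x = (1 - x) * (\<Sum>k. s k * x^k * gb \<delta> (x^k))" for x
    define Mg where "Mg x = (1 - x) * (\<Sum>k. 1 * x^k * gb \<delta> (x^k))" for x
    define F where "F x = (\<Sum>i\<le>d. c i * ((1 - x) / (1 - x^Suc i)) * ((1 - x^Suc i) * (\<Sum>k. s k * (x^Suc i)^k) - l))" for x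
    have gk: "0 \<le> gb \<delta> y" "gb \<delta> y \<le> 1" for y unfolding gb_def using Gb_nonneg Gb_le1[OF \<delta>(2)] by auto
    have E: "eventually (\<lambda>x. \<bar>Lg x - l * Mg x\<bar> \<le> \<epsilon> * LB) (at_left 1)"
    proof -
      have "eventually (\<lambda>x. dist (F x) 0 < \<eta>) (at_left 1)"
        using tendstoD[OF poly_abel_tendsto[OF ab, where d=d and c=c] \<eta>(1)] unfolding F_def by simp
      then show ?thesis using ev_at_left_1
      proof eventually_elim
        case (elim x)
        have x: "0 < x" "x < 1" using elim by auto
        have FX: "\<bar>F x\<bar> < \<eta>" using elim by (simp add: dist_real_def)
        have xk: "0 \<le> x^k" "x^k \<le> 1" for k using x by (auto simp: power_le_one)
        have Pk: "\<bar>gb \<delta> (x^k) - P (x^k)\<bar> < \<eta>" for k using P(2) xk by auto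
        have Pk2: "\<bar>P (x^k)\<bar> \<le> 2" for k using Pk[of k] gk[of "x^k"] \<eta>(2) by linarith
        have one: "\<bar>(\<lambda>_. 1::real) k\<bar> \<le> 1" for k by simp
        have s1: "summable (\<lambda>k. s k * x^k * gb \<delta> (x^k))"
          by (rule bsum2[OF M(2), of "\<lambda>k. gb \<delta> (x^k)" 1]) (use gk x in auto)
        have s2: "summable (\<lambda>k. s k * x^k * P (x^k))"
          by (rule bsum2[OF M(2), of "\<lambda>k. P (x^k)" 2]) (use Pk2 x in auto)
        have s3: "summable (\<lambda>k. 1 * x^k * gb \<delta> (x^k))"
          by (rule bsum2[OF one, of "\<lambda>k. gb \<delta> (x^k)" 1]) (use gk x in auto)
        have s4: "summable (\<lambda>k. 1 * x^k * P (x^k))"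
          by (rule bsum2[OF one, of "\<lambda>k. P (x^k)" 2]) (use Pk2 x in auto)
        have sg: "summable (\<lambda>k. c * x^k)" for c using geom_sum_mult[of x c] x by auto
        define LP where "LP = (1 - x) * (\<Sum>k. s k * x^k * P (x^k))"
        define MP where "MP = (1 - x) * (\<Sum>k. 1 * x^k * P (x^k))"
        have d1: "\<bar>Lg x - LP\<bar> \<le> M * \<eta>"
        proof -
          have "(\<Sum>k. s k * x^k * gb \<delta> (x^k)) - (\<Sum>k. s k * x^k * P (x^k)) = (\<Sum>k. s k * x^k * gb \<delta> (x^k) - s k * x^k * P (x^k))"
            by (rule suminf_diff[OF s1 s2])
          moreover have "\<bar>\<Sum>k. s k * x^k * gb \<delta> (x^k) - s k * x^k * P (x^k)\<bar> \<le> (\<Sum>k. (M * \<eta>) * x^k)"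
          proof (rule abs_suminf_le(2)[OF _ sg])
            fix k
            have "s k * x^k * gb \<delta> (x^k) - s k * x^k * P (x^k) = s k * (gb \<delta> (x^k) - P (x^k)) * x^k"
              by (simp add: algebra_simps)
            then have "\<bar>s k * x^k * gb \<delta> (x^k) - s k * x^k * P (x^k)\<bar> = \<bar>s k\<bar> * \<bar>gb \<delta> (x^k) - P (x^k)\<bar> * x^k"
              using xk by (simp add: abs_mult)
            also have "\<dots> \<le> M * \<eta> * x^k" using M(2)[of k] Pk[of k] xk by (intro mult_right_mono mult_mono) auto
            finally show "\<bar>s k * x^k * gb \<delta> (x^k) - s k * x^k * P (x^k)\<bar> \<le> M * \<eta> * x^k" .
          qed
          ultimately have "\<bar>(\<Sum>k. s k * x^k * gb \<delta> (x^k)) - (\<Sum>k. s k * x^k * P (x^k))\<bar> \<le> M * \<eta> / (1 - x)"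
            using geom_sum_mult[of x "M * \<eta>"] x by simp
          then have "(1 - x) * \<bar>(\<Sum>k. s k * x^k * gb \<delta> (x^k)) - (\<Sum>k. s k * x^k * P (x^k))\<bar> \<le> (1 - x) * (M * \<eta> / (1 - x))"
            using x by (intro mult_left_mono) auto
          then show ?thesis unfolding Lg_def LP_def using x by (simp add: abs_mult right_diff_distrib[symmetric])
        qed
        have d2: "\<bar>MP - Mg x\<bar> \<le> \<eta>"
        proof -
          have "(\<Sum>k. 1 * x^k * P (x^k)) - (\<Sum>k. 1 * x^k * gb \<delta> (x^k)) = (\<Sum>k. 1 * x^k * P (x^k) - 1 * x^k * gb \<delta> (x^k))"
            by (rule suminf_diff[OF s4 s3])
          moreover have "\<bar>\<Sum>k. 1 * x^k * P (x^k) - 1 * x^k * gb \<delta> (x^k)\<bar> \<le> (\<Sum>k. \<eta> * x^k)"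
          proof (rule abs_suminf_le(2)[OF _ sg])
            fix k
            have "1 * x^k * P (x^k) - 1 * x^k * gb \<delta> (x^k) = - ((gb \<delta> (x^k) - P (x^k)) * x^k)"
              by (simp add: algebra_simps)
            then have "\<bar>1 * x^k * P (x^k) - 1 * x^k * gb \<delta> (x^k)\<bar> = \<bar>gb \<delta> (x^k) - P (x^k)\<bar> * x^k"
              using xk by (simp only: abs_minus_cancel abs_mult abs_of_nonneg)
            also have "\<dots> \<le> \<eta> * x^k" using Pk[of k] xk by (intro mult_right_mono) auto
            finally show "\<bar>1 * x^k * P (x^k) - 1 * x^k * gb \<delta> (x^k)\<bar> \<le> \<eta> * x^k" .
          qed
          ultimately have "\<bar>(\<Sum>k. 1 * x^k * P (x^k)) - (\<Sum>k. 1 * x^k * gb \<delta> (x^k))\<bar> \<le> \<eta> / (1 - x)"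
            using geom_sum_mult[of x "\<eta>"] x by simp
          then have "(1 - x) * \<bar>(\<Sum>k. 1 * x^k * P (x^k)) - (\<Sum>k. 1 * x^k * gb \<delta> (x^k))\<bar> \<le> (1 - x) * (\<eta> / (1 - x))"
            using x by (intro mult_left_mono) auto
          then show ?thesis unfolding Mg_def MP_def using x by (simp add: abs_mult right_diff_distrib[symmetric])
        qed
        have d3: "LP - l * MP = F x"
          unfolding LP_def MP_def F_def Pc using poly_abel_diff[OF sm x, where d=d and c=c and l=l] by simp
        have "Lg x - l * Mg x = (Lg x - LP) + (LP - l * MP) + l * (MP - Mg x)" by (simp add: algebra_simps)
        then have "\<bar>Lg x - l * Mg x\<bar> \<le> \<bar>Lg x - LP\<bar> + \<bar>LP - l * MP\<bar> + \<bar>l * (MP - Mg x)\<bar>"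
          using abs3 by metis
        also have "\<dots> = \<bar>Lg x - LP\<bar> + \<bar>F x\<bar> + \<bar>l\<bar> * \<bar>MP - Mg x\<bar>" using d3 by (simp add: abs_mult)
        also have "\<dots> \<le> M * \<eta> + \<eta> + \<bar>l\<bar> * \<eta>"
        proof -
          have "\<bar>l\<bar> * \<bar>MP - Mg x\<bar> \<le> \<bar>l\<bar> * \<eta>" using d2 by (intro mult_left_mono) auto
          then show ?thesis using d1 FX by linarith
        qed
        also have "\<dots> = (M + \<bar>l\<bar> + 1) * \<eta>" by (simp add: algebra_simps)
        also have "\<dots> \<le> \<epsilon> * LB" by (rule \<eta>(3))
        finally show ?case .
      qed
    qed
    have E2: "eventually (\<lambda>n. \<bar>Lg (exp (- 1 / real n)) - l * Mg (exp (- 1 / real n))\<bar> \<le> \<epsilon> * LB) sequentially"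
      by (rule eventually_compose_filterlim[OF E exp_filterlim])
    show ?thesis using E2 eventually_ge_at_top[of "max N0 (2 * q)"]
    proof eventually_elim
      case (elim n)
      define x where "x = exp (- 1 / real n)"
      have nN: "n \<ge> N0" "n \<ge> 2 * q" using elim by auto
      have npos: "n > 0" using nN \<delta>N by simp
      have x: "0 \<le> x" "x < 1" unfolding x_def using npos by auto
      have xk: "0 \<le> x^k" for k using x by simp
      have one: "\<bar>(\<lambda>_. 1::real) k\<bar> \<le> 1" for k by simp
      have s1: "summable (\<lambda>k. s k * x^k * gb \<delta> (x^k))"
        by (rule bsum2[OF M(2), of "\<lambda>k. gb \<delta> (x^k)" 1]) (use gk x in auto)
      have s3: "summable (\<lambda>k. 1 * x^k * gb \<delta> (x^k))"
        by (rule bsum2[OF one, of "\<lambda>k. gb \<delta> (x^k)" 1]) (use gk x in auto)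
      have Mglb: "Mg x \<ge> LB" unfolding Mg_def LB_def x_def using Mg_lower[OF \<delta>(1,2) q nN(2)] by simp
      have pw: "\<bar>s k * x^k * gb \<delta> (x^k) - s n * (1 * x^k * gb \<delta> (x^k))\<bar> \<le> \<epsilon> * (1 * x^k * gb \<delta> (x^k))" for k
      proof -
        have eq: "s k * x^k * gb \<delta> (x^k) - s n * (1 * x^k * gb \<delta> (x^k)) = (s k - s n) * (x^k * gb \<delta> (x^k))"
          by (simp add: algebra_simps)
        have nn: "0 \<le> x^k * gb \<delta> (x^k)" using xk gk by simp
        show ?thesis
        proof (cases "gb \<delta> (x^k) = 0")
          case True then show ?thesis by simp
        next
          case False
          then have "Gb \<delta> (real k / real n) \<noteq> 0" using gb_exp[OF \<delta>(2) npos, of k] unfolding x_def by simp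
          then have u: "1 < real k / real n" "real k / real n < 1 + \<delta>" using Gb_support by blast+
          have "real n < real k" using u(1) npos by (simp add: field_simps)
          then have nk: "n \<le> k" by simp
          have "real k \<le> (1 + \<delta>0) * real n"
          proof -
            have "real k < (1 + \<delta>) * real n" using u(2) npos by (simp add: field_simps)
            also have "\<dots> \<le> (1 + \<delta>0) * real n" using \<delta>(3) by (intro mult_right_mono) auto
            finally show ?thesis by simp
          qed
          then have "\<bar>s k - s n\<bar> < \<epsilon>" using \<delta>N(3)[of n k] nN nk by simp
          then have "\<bar>s k - s n\<bar> * (x^k * gb \<delta> (x^k)) \<le> \<epsilon> * (x^k * gb \<delta> (x^k))"
            using nn by (intro mult_right_mono) auto
          moreover have "\<bar>(s k - s n) * (x^k * gb \<delta> (x^k))\<bar> = \<bar>s k - s n\<bar> * (x^k * gb \<delta> (x^k))"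
            using xk[of k] gk[of "x^k"] by (simp add: abs_mult)
          ultimately show ?thesis unfolding eq by simp
        qed
      qed
      have sd: "summable (\<lambda>k. s n * (1 * x^k * gb \<delta> (x^k)))" by (rule summable_mult[OF s3])
      have se: "summable (\<lambda>k. \<epsilon> * (1 * x^k * gb \<delta> (x^k)))" by (rule summable_mult[OF s3])
      have "(\<Sum>k. s k * x^k * gb \<delta> (x^k)) - s n * (\<Sum>k. 1 * x^k * gb \<delta> (x^k))
          = (\<Sum>k. s k * x^k * gb \<delta> (x^k) - s n * (1 * x^k * gb \<delta> (x^k)))"
        using suminf_diff[OF s1 sd] suminf_mult[OF s3, of "s n"] by simp
      moreover have "\<bar>\<Sum>k. s k * x^k * gb \<delta> (x^k) - s n * (1 * x^k * gb \<delta> (x^k))\<bar> \<le> (\<Sum>k. \<epsilon> * (1 * x^k * gb \<delta> (x^k)))"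
        by (rule abs_suminf_le(2)[OF pw se])
      moreover have "(\<Sum>k. \<epsilon> * (1 * x^k * gb \<delta> (x^k))) = \<epsilon> * (\<Sum>k. 1 * x^k * gb \<delta> (x^k))"
        by (rule suminf_mult[OF s3])
      ultimately have "\<bar>(\<Sum>k. s k * x^k * gb \<delta> (x^k)) - s n * (\<Sum>k. 1 * x^k * gb \<delta> (x^k))\<bar>
          \<le> \<epsilon> * (\<Sum>k. 1 * x^k * gb \<delta> (x^k))" by simp
      then have A1: "\<bar>Lg x - s n * Mg x\<bar> \<le> \<epsilon> * Mg x"
      proof -
        define U where "U = (\<Sum>k. s k * x^k * gb \<delta> (x^k))"
        define V where "V = (\<Sum>k. 1 * x^k * gb \<delta> (x^k))"
        assume h: "\<bar>(\<Sum>k. s k * x^k * gb \<delta> (x^k)) - s n * (\<Sum>k. 1 * x^k * gb \<delta> (x^k))\<bar>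
          \<le> \<epsilon> * (\<Sum>k. 1 * x^k * gb \<delta> (x^k))"
        have "Lg x - s n * Mg x = (1 - x) * (U - s n * V)" unfolding Lg_def Mg_def U_def V_def
          by (simp add: algebra_simps)
        then have "\<bar>Lg x - s n * Mg x\<bar> = (1 - x) * \<bar>U - s n * V\<bar>" using x by (simp add: abs_mult)
        also have "\<dots> \<le> (1 - x) * (\<epsilon> * V)" using h x unfolding U_def V_def by (intro mult_left_mono) auto
        also have "\<dots> = \<epsilon> * Mg x" unfolding Mg_def V_def by simp
        finally show ?thesis .
      qed
      have A2: "\<bar>Lg x - l * Mg x\<bar> \<le> \<epsilon> * LB" using elim unfolding x_def by simp
      have MgP: "Mg x > 0" using Mglb LB by simp
      have "(s n * Mg x - Lg x) + (Lg x - l * Mg x) = (s n - l) * Mg x" by (simp add: algebra_simps)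
      then have "\<bar>s n - l\<bar> * Mg x = \<bar>(s n * Mg x - Lg x) + (Lg x - l * Mg x)\<bar>" using MgP
        by (simp add: abs_mult)
      also have "\<dots> \<le> \<bar>s n * Mg x - Lg x\<bar> + \<bar>Lg x - l * Mg x\<bar>" by (rule abs_triangle_ineq)
      also have "\<dots> \<le> \<epsilon> * Mg x + \<epsilon> * LB" using A1 A2 by (simp add: abs_minus_commute)
      also have "\<dots> \<le> (2 * \<epsilon>) * Mg x"
      proof -
        have "\<epsilon> * LB \<le> \<epsilon> * Mg x" using Mglb \<epsilon> by (intro mult_left_mono) auto
        then show ?thesis by simp
      qed
      finally show ?case using MgP by simp
    qed
  qed
  show "s \<longlonglongrightarrow> l"
  proof (rule LIMSEQ_I)
    fix r :: real assume r: "r > 0"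
    from main[of "r/3"] r obtain no where "\<forall>n\<ge>no. \<bar>s n - l\<bar> \<le> 2 * (r/3)"
      by (auto simp: eventually_sequentially)
    then show "\<exists>no. \<forall>n\<ge>no. norm (s n - l) < r" using r by force
  qed
qed


theorem corollary4:
  fixes f :: "real \<Rightarrow> real" and p :: "nat \<Rightarrow> real"
  assumes "abel_continuous f"
    and "slowly_oscillating p"
    and "abel_convergent p"
  shows "convergent (\<lambda>n. f (p n))"
proof -
  obtain l where ab: "abel_convergent_to p l" using assms(3) unfolding abel_convergent_def by blast
  have "p \<longlonglongrightarrow> l" by (rule tauberian[OF assms(2) ab])
  then have "(\<lambda>n. f (p n)) \<longlonglongrightarrow> f l"
    by (intro isCont_tendsto_compose[OF abel_continuous_isCont[OF assms(1)]])
  then show ?thesis by (rule convergentI)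
qed

end
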